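(* Let $n\geq1$ and $p,q>1$ satisfy \[ \frac{p+1}{pq-1}>\frac{n-1}{2},\qquad \frac{n-1}{2}(q-1)<1 . \] Let $\varepsilon>0$ and $C>0$, and suppose $H\in C^1(\mathbb{R}_+)$ and $G\in C^2(\mathbb{R}_+)$ satisfy, for all $t\geq0$, \[ H'(t)\geq C\langle t\rangle^{-\frac{n-1}{2}(q-1)}G(t)^q,\quad H(t)\geq0,\quad H'(t)\geq0, \] \[ G''(t)+2G'(t)\geq C\langle t\rangle^{-\frac{n-1}{2}(p-1)}H(t)^p,\quad G(t)\geq C\varepsilon,\quad G'(t)\geq0 . \] Then for any $M>0$ there exist constants $A>0$ and $T>0$ (possibly depending on $\varepsilon$) such that $G(t)\geq A\langle t\rangle^M$ for all $t\geq T$.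
   Context: $\langle t\rangle:=\sqrt{1+t^2}$, $\mathbb{R}_+=[0,\infty)$. *)

theory Defs
  imports "HOL-Analysis.Analysis"
begin

definition jb :: "real \<Rightarrow> real" where
  "jb t = sqrt (1 + t\<^sup>2)"

end

theory Submission
  imports Defs
begin

lemma mono_deriv:
  fixes f f' :: "real \<Rightarrow> real"
  assumes "a \<le> b" "\<And>x. a \<le> x \<Longrightarrow> x \<le> b \<Longrightarrow> (f has_real_derivative f' x) (at x)"
    "\<And>x. a \<le> x \<Longrightarrow> x \<le> b \<Longrightarrow> f' x \<ge> 0"
  shows "f a \<le> f b"
proof (rule DERIV_nonneg_imp_increasing_open[OF assms(1)])
  show "\<And>x. a < x \<Longrightarrow> x < b \<Longrightarrow> \<exists>y. (f has_real_derivative y) (at x) \<and> 0 \<le> y"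
    using assms by (meson less_eq_real_def)
  show "continuous_on {a..b} f"
    using assms(2) by (meson DERIV_isCont atLeastAtMost_iff continuous_at_imp_continuous_on)
qed

lemma growth:
  fixes f f' :: "real \<Rightarrow> real"
  assumes T: "T > 0" and be: "\<beta> > 0" and c: "c > 0"
    and d: "\<And>t. t \<ge> T \<Longrightarrow> (f has_real_derivative f' t) (at t)"
    and lb: "\<And>t. t \<ge> T \<Longrightarrow> f' t \<ge> c * t powr (\<beta> - 1)"
    and f0: "f T \<ge> 0"
  shows "\<And>t. t \<ge> 2 * T \<Longrightarrow> f t \<ge> (c / \<beta> * (1 - 2 powr (-\<beta>))) * t powr \<beta>"
proof -
  fix t assume t: "t \<ge> 2 * T"
  define g where "g = (\<lambda>s. f s - c / \<beta> * s powr \<beta>)"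
  have "g T \<le> g t"
  proof (rule mono_deriv[where f = g and f' = "\<lambda>s. f' s - c * s powr (\<beta> - 1)"])
    show "T \<le> t" using t T by simp
    fix x assume x: "T \<le> x" "x \<le> t"
    then have "x > 0" using T by simp
    show "(g has_real_derivative f' x - c * x powr (\<beta> - 1)) (at x)"
      unfolding g_def using d[OF x(1)] has_real_derivative_powr[OF \<open>x > 0\<close>, of \<beta>] be \<open>x > 0\<close>
      by (auto intro!: derivative_eq_intros)
    show "f' x - c * x powr (\<beta> - 1) \<ge> 0" using lb[OF x(1)] by simp
  qed
  then have 1: "f t \<ge> c / \<beta> * (t powr \<beta> - T powr \<beta>)" using f0 be c
    unfolding g_def by (simp add: algebra_simps)
  have "T powr \<beta> \<le> (t / 2) powr \<beta>" using T t be by (intro powr_mono2) auto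
  also have "\<dots> = 2 powr (-\<beta>) * t powr \<beta>" using T t by (simp add: powr_divide powr_minus divide_simps)
  finally have "t powr \<beta> - T powr \<beta> \<ge> (1 - 2 powr (-\<beta>)) * t powr \<beta>" by (simp add: algebra_simps)
  then have "c / \<beta> * (t powr \<beta> - T powr \<beta>) \<ge> c / \<beta> * ((1 - 2 powr (-\<beta>)) * t powr \<beta>)"
    using c be by (intro mult_left_mono) auto
  with 1 show "f t \<ge> (c / \<beta> * (1 - 2 powr (-\<beta>))) * t powr \<beta>" by simp
qed

lemma jb_ge1: "jb t \<ge> 1" unfolding jb_def by simp
lemma jb_mono: "0 \<le> s \<Longrightarrow> s \<le> t \<Longrightarrow> jb s \<le> jb t"
  unfolding jb_def by (simp add: power_mono)
lemma jb_le: "t \<ge> 1 \<Longrightarrow> jb t \<le> sqrt 2 * t"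
proof -
  assume t: "t \<ge> 1"
  have "1 + t\<^sup>2 \<le> 2 * t\<^sup>2" using t by (simp add: one_le_power)
  then have "jb t \<le> sqrt (2 * t\<^sup>2)" unfolding jb_def by simp
  also have "\<dots> = sqrt 2 * t" using t by (simp add: real_sqrt_mult)
  finally show ?thesis .
qed
lemma jb_neg:
  assumes "e \<ge> 0" "0 \<le> s" "s \<le> t" "t \<ge> 1"
  shows "jb s powr (-e) \<ge> sqrt 2 powr (-e) * t powr (-e)"
proof -
  have "jb s \<le> sqrt 2 * t" using jb_mono[OF assms(2,3)] jb_le[OF assms(4)] by simp
  then have "(sqrt 2 * t) powr (-e) \<le> jb s powr (-e)"
    using assms jb_ge1[of s] by (intro powr_mono2') auto
  then show ?thesis by (simp add: powr_mult)
qed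

lemma step:
  fixes H H' G G' G'' :: "real \<Rightarrow> real" and a b p q C \<alpha> D T :: real
  assumes a1: "a < 1" and a0: "a \<ge> 0" and b0: "b \<ge> 0" and p: "p > 0" and q: "q > 0"
    and Cpos: "C > 0" and al: "\<alpha> \<ge> 0" and D: "D > 0" and T: "T \<ge> 1"
    and del: "p * (1 - a) - b + 1 > 0"
    and Hd: "\<And>t. t > 0 \<Longrightarrow> (H has_real_derivative H' t) (at t)"
    and Gd: "\<And>t. t > 0 \<Longrightarrow> (G has_real_derivative G' t) (at t)"
    and G'd: "\<And>t. t > 0 \<Longrightarrow> (G' has_real_derivative G'' t) (at t)"
    and ineqH: "\<And>t. t \<ge> 0 \<Longrightarrow> H' t \<ge> C * jb t powr (-a) * G t powr q"
    and Hnn: "\<And>t. t \<ge> 0 \<Longrightarrow> H t \<ge> 0"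
    and H'nn: "\<And>t. t \<ge> 0 \<Longrightarrow> H' t \<ge> 0"
    and ineqG: "\<And>t. t \<ge> 0 \<Longrightarrow> G'' t + 2 * G' t \<ge> C * jb t powr (-b) * H t powr p"
    and G'nn: "\<And>t. t \<ge> 0 \<Longrightarrow> G' t \<ge> 0"
    and Gpos: "\<And>t. t \<ge> 0 \<Longrightarrow> G t > 0"
    and hyp: "\<And>t. t \<ge> T \<Longrightarrow> G t \<ge> D * t powr \<alpha>"
  shows "\<exists>D'>0. \<exists>T'\<ge>1. \<forall>t\<ge>T'. G t \<ge> D' * t powr (p * q * \<alpha> + (p * (1 - a) - b + 1))"
proof -
  define \<gamma> where "\<gamma> = q * \<alpha> + 1 - a"
  have ga: "\<gamma> > 0" unfolding \<gamma>_def using mult_nonneg_nonneg[of q \<alpha>] q al a1 by linarith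
  define c1 where "c1 = C * sqrt 2 powr (-a) * D powr q"
  have c1: "c1 > 0" unfolding c1_def using Cpos D by simp
  have H'lb: "H' t \<ge> c1 * t powr (\<gamma> - 1)" if t: "t \<ge> T" for t
  proof -
    have t0: "t > 0" using t T by simp
    have g1: "G t powr q \<ge> D powr q * t powr (q * \<alpha>)"
    proof -
      have "(D * t powr \<alpha>) powr q \<le> G t powr q"
        using hyp[OF t] q D t0 by (intro powr_mono2) auto
      moreover have "(D * t powr \<alpha>) powr q = D powr q * t powr (q * \<alpha>)"
        using D t0 by (simp add: powr_mult powr_powr mult.commute)
      ultimately show ?thesis by simp
    qed
    have j1: "jb t powr (-a) \<ge> sqrt 2 powr (-a) * t powr (-a)"
      using jb_neg[OF a0, of t t] t T by simp
    have "C * (sqrt 2 powr (-a) * t powr (-a)) * (D powr q * t powr (q * \<alpha>)) \<le> C * jb t powr (-a) * G t powr q"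
      using g1 j1 Cpos by (intro mult_mono mult_left_mono) auto
    moreover have "C * (sqrt 2 powr (-a) * t powr (-a)) * (D powr q * t powr (q * \<alpha>)) = c1 * t powr (\<gamma> - 1)"
      unfolding c1_def \<gamma>_def using t0 by (simp add: powr_add[symmetric] algebra_simps)
    ultimately show ?thesis using ineqH[of t] t0 by simp
  qed
  define c2 where "c2 = c1 / \<gamma> * (1 - 2 powr (-\<gamma>))"
  have c2: "c2 > 0" unfolding c2_def using c1 ga powr_less_one[of 2 "-\<gamma>"] by simp
  have Hlb: "H t \<ge> c2 * t powr \<gamma>" if "t \<ge> 2 * T" for t
    unfolding c2_def
    by (rule growth[where f = H and f' = H' and T = T, OF _ ga c1 Hd H'lb Hnn]) (use T that in auto)
  define T2 where "T2 = 2 * T + 1"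
  define c3' where "c3' = C * sqrt 2 powr (-b) * c2 powr p / 2 powr (\<gamma> * p)"
  have c3': "c3' > 0" unfolding c3'_def using Cpos c2 by simp
  define c3 where "c3 = c3' * (1 - exp (-2)) / 2"
  have c3: "c3 > 0" unfolding c3_def using c3' by simp
  define \<beta> where "\<beta> = p * \<gamma> - b + 1"
  have be_eq: "\<beta> = p * q * \<alpha> + (p * (1 - a) - b + 1)" unfolding \<beta>_def \<gamma>_def by (simp add: algebra_simps)
  have "p * q * \<alpha> \<ge> 0" using p q al by simp
  then have be: "\<beta> > 0" unfolding be_eq using del by linarith
  have G'lb: "G' t \<ge> c3 * t powr (\<beta> - 1)" if t: "t \<ge> T2" for t
  proof -
    have t0: "t > 0" "t \<ge> 2" "t - 1 \<ge> 2 * T" using t T unfolding T2_def by auto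
    define K where "K = C * (sqrt 2 powr (-b) * t powr (-b)) * (c2 powr p * (t / 2) powr (\<gamma> * p))"
    have Keq: "K = c3' * t powr (\<beta> - 1)"
      unfolding K_def c3'_def \<beta>_def using t0 by (simp add: powr_divide powr_add[symmetric] algebra_simps)
    have Hb: "(c2 * (t / 2) powr \<gamma>) \<le> H (t - 1)"
    proof -
      have "(t / 2) powr \<gamma> \<le> (t - 1) powr \<gamma>" using t0 ga by (intro powr_mono2) auto
      then have "c2 * (t / 2) powr \<gamma> \<le> c2 * (t - 1) powr \<gamma>" using c2 by simp
      also have "\<dots> \<le> H (t - 1)" using Hlb[OF t0(3)] .
      finally show ?thesis .
    qed
    have low: "G'' s + 2 * G' s \<ge> K" if s: "t - 1 \<le> s" "s \<le> t" for s
    proof -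
      have s0: "s > 0" using s t0 T by simp
      have "H (t - 1) \<le> H s"
        by (rule mono_deriv[where f = H and f' = H']) (use s t0 T Hd H'nn in auto)
      with Hb have hs: "c2 * (t / 2) powr \<gamma> \<le> H s" by simp
      have "(c2 * (t / 2) powr \<gamma>) powr p \<le> H s powr p"
        using hs p c2 t0 by (intro powr_mono2) auto
      moreover have "(c2 * (t / 2) powr \<gamma>) powr p = c2 powr p * (t / 2) powr (\<gamma> * p)"
        using c2 t0 by (simp add: powr_mult powr_powr)
      ultimately have h2: "c2 powr p * (t / 2) powr (\<gamma> * p) \<le> H s powr p" by simp
      have j: "jb s powr (-b) \<ge> sqrt 2 powr (-b) * t powr (-b)"
        using jb_neg[OF b0, of s t] s s0 t0 by simp
      have "K \<le> C * jb s powr (-b) * H s powr p"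
        unfolding K_def using h2 j Cpos by (intro mult_mono mult_left_mono) auto
      then show ?thesis using ineqG[of s] s0 by simp
    qed
    define \<psi> where "\<psi> = (\<lambda>s. exp (2 * s) * G' s - K / 2 * exp (2 * s))"
    have "\<psi> (t - 1) \<le> \<psi> t"
    proof (rule mono_deriv[where f = \<psi> and f' = "\<lambda>s. exp (2 * s) * (G'' s + 2 * G' s - K)"])
      show "t - 1 \<le> t" by simp
      fix x assume x: "t - 1 \<le> x" "x \<le> t"
      then have x0: "x > 0" using t0 by simp
      show "(\<psi> has_real_derivative exp (2 * x) * (G'' x + 2 * G' x - K)) (at x)"
        unfolding \<psi>_def using G'd[OF x0]
        by (auto intro!: derivative_eq_intros simp: algebra_simps)
      show "exp (2 * x) * (G'' x + 2 * G' x - K) \<ge> 0" using low[OF x] by simp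
    qed
    then have i: "exp (2 * t - 2) * G' (t - 1) - K / 2 * exp (2 * t - 2) \<le> exp (2 * t) * G' t - K / 2 * exp (2 * t)"
      unfolding \<psi>_def by (simp add: algebra_simps)
    have e: "exp (2 * t - 2) = exp (2 * t) * exp (-2)" by (simp add: exp_add[symmetric])
    have nn: "exp (2 * t) * exp (-2) * G' (t - 1) \<ge> 0" using G'nn t0 by simp
    have eq: "exp (2 * t) * (K / 2 * (1 - exp (-2))) = K / 2 * exp (2 * t) - K / 2 * (exp (2 * t) * exp (-2))"
      by (simp add: algebra_simps)
    from i nn eq have "exp (2 * t) * (K / 2 * (1 - exp (-2))) \<le> exp (2 * t) * G' t"
      unfolding e by linarith
    then have "K / 2 * (1 - exp (-2)) \<le> G' t" by simp
    then show ?thesis unfolding c3_def Keq by (simp add: algebra_simps)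
  qed
  define c4 where "c4 = c3 / \<beta> * (1 - 2 powr (-\<beta>))"
  have c4: "c4 > 0" unfolding c4_def using c3 be powr_less_one[of 2 "-\<beta>"] by simp
  have "G t \<ge> c4 * t powr \<beta>" if "t \<ge> 2 * T2" for t
    unfolding c4_def
    by (rule growth[where f = G and f' = G' and T = T2, OF _ be c3 Gd G'lb])
       (use T that Gpos[of T2] in \<open>auto simp: T2_def\<close>)
  then show ?thesis using c4 T unfolding be_eq T2_def
    by (intro exI[of _ c4] conjI exI[of _ "2 * (2 * T + 1)"]) auto
qed

theorem lemma5p2:
  fixes n :: nat and p q \<epsilon> C :: real
    and H H' G G' G'' :: "real \<Rightarrow> real"
  assumes n: "n \<ge> 1"
    and p: "p > 1" and q: "q > 1"
    and cond1: "(p + 1) / (p * q - 1) > (real n - 1) / 2"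
    and cond2: "(real n - 1) / 2 * (q - 1) < 1"
    and eps: "\<epsilon> > 0" and Cpos: "C > 0"
    and H_deriv: "\<And>t. t \<ge> 0 \<Longrightarrow> (H has_real_derivative H' t) (at t within {0..})"
    and H'_cont: "continuous_on {0..} H'"
    and G_deriv: "\<And>t. t \<ge> 0 \<Longrightarrow> (G has_real_derivative G' t) (at t within {0..})"
    and G'_deriv: "\<And>t. t \<ge> 0 \<Longrightarrow> (G' has_real_derivative G'' t) (at t within {0..})"
    and G''_cont: "continuous_on {0..} G''"
    and ineqH: "\<And>t. t \<ge> 0 \<Longrightarrow>
        H' t \<ge> C * jb t powr (- ((real n - 1) / 2 * (q - 1))) * G t powr q"
    and H_nonneg: "\<And>t. t \<ge> 0 \<Longrightarrow> H t \<ge> 0"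
    and H'_nonneg: "\<And>t. t \<ge> 0 \<Longrightarrow> H' t \<ge> 0"
    and ineqG: "\<And>t. t \<ge> 0 \<Longrightarrow>
        G'' t + 2 * G' t \<ge> C * jb t powr (- ((real n - 1) / 2 * (p - 1))) * H t powr p"
    and G_lower: "\<And>t. t \<ge> 0 \<Longrightarrow> G t \<ge> C * \<epsilon>"
    and G'_nonneg: "\<And>t. t \<ge> 0 \<Longrightarrow> G' t \<ge> 0"
  shows "\<forall>M > 0. \<exists>A > 0. \<exists>T > 0. \<forall>t \<ge> T. G t \<ge> A * jb t powr M"
proof -
  define m where "m = (real n - 1) / 2"
  have m0: "m \<ge> 0" unfolding m_def using n by simp
  define a where "a = (real n - 1) / 2 * (q - 1)"
  define b where "b = (real n - 1) / 2 * (p - 1)"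
  define \<delta> where "\<delta> = p * (1 - a) - b + 1"
  have a0: "a \<ge> 0" unfolding a_def using m0 q m_def by simp
  have b0: "b \<ge> 0" unfolding b_def using m0 p m_def by simp
  have pq: "p * q > 1" using mult_strict_mono[of 1 p 1 q] p q by simp
  have "m * (p * q - 1) < p + 1" using cond1 pq unfolding m_def by (simp add: field_simps)
  moreover have "\<delta> = p + 1 - m * (p * q - 1)" unfolding \<delta>_def a_def b_def m_def by (simp add: field_simps)
  ultimately have del: "\<delta> > 0" by simp
  have at: "at t within {0..} = at t" if "t > 0" for t :: real
    using that by (intro at_within_interior) auto
  have Hd: "(H has_real_derivative H' t) (at t)" if "t > 0" for t
    using H_deriv[of t] at[OF that] that by simp
  have Gd: "(G has_real_derivative G' t) (at t)" if "t > 0" for t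
    using G_deriv[of t] at[OF that] that by simp
  have G'd: "(G' has_real_derivative G'' t) (at t)" if "t > 0" for t
    using G'_deriv[of t] at[OF that] that by simp
  have Ce: "C * \<epsilon> > 0" using Cpos eps by simp
  have Gpos: "G t > 0" if "t \<ge> 0" for t
    using G_lower[OF that] Ce by linarith
  have P: "\<exists>\<alpha>\<ge>real k * \<delta>. \<exists>D>0. \<exists>T\<ge>1. \<forall>t\<ge>T. G t \<ge> D * t powr \<alpha>" for k :: nat
  proof (induction k)
    case 0
    show ?case
      using G_lower Cpos eps by (intro exI[of _ 0] conjI exI[of _ "C * \<epsilon>"] exI[of _ 1]) auto
  next
    case (Suc k)
    then obtain \<alpha> D T where al: "\<alpha> \<ge> real k * \<delta>" and D: "D > 0" and T: "T \<ge> 1"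
      and hyp: "\<And>t. t \<ge> T \<Longrightarrow> G t \<ge> D * t powr \<alpha>" by blast
    have al0: "\<alpha> \<ge> 0" using al del mult_nonneg_nonneg[of "real k" \<delta>] by linarith
    obtain D' T' where D': "D' > 0" "T' \<ge> 1"
      and h: "\<forall>t\<ge>T'. G t \<ge> D' * t powr (p * q * \<alpha> + (p * (1 - a) - b + 1))"
      using step[of a b p q C \<alpha> D T H H' G G' G'', OF cond2[folded a_def] a0 b0 _ _ Cpos al0 D T
          del[unfolded \<delta>_def] Hd Gd G'd ineqH[folded a_def] H_nonneg H'_nonneg ineqG[folded b_def]
          G'_nonneg Gpos hyp] p q by auto
    have "p * q * \<alpha> \<ge> \<alpha>" using pq al0 by (simp add: mult_le_cancel_right1)
    then have "p * q * \<alpha> + \<delta> \<ge> real (Suc k) * \<delta>" using al by (simp add: algebra_simps)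
    then show ?case using D' h unfolding \<delta>_def by blast
  qed
  show ?thesis
  proof (intro allI impI)
    fix M :: real assume M: "M > 0"
    define k where "k = nat \<lceil>M / \<delta>\<rceil>"
    have "M / \<delta> \<le> real k" unfolding k_def by linarith
    then have kM: "real k * \<delta> \<ge> M" using del by (simp add: field_simps)
    obtain \<alpha> D T where al: "\<alpha> \<ge> real k * \<delta>" and D: "D > 0" and T: "T \<ge> 1"
      and hyp: "\<And>t. t \<ge> T \<Longrightarrow> G t \<ge> D * t powr \<alpha>" using P[of k] by blast
    have A0: "D / sqrt 2 powr M > 0" using D by simp
    have T0: "T > 0" using T by simp
    have "\<forall>t \<ge> T. G t \<ge> D / sqrt 2 powr M * jb t powr M"
    proof (intro allI impI)
      fix t assume t: "t \<ge> T"
      have t1: "t \<ge> 1" using t T by simp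
      have "jb t powr M \<le> (sqrt 2 * t) powr M" using jb_le[OF t1] jb_ge1[of t] M by (intro powr_mono2) auto
      also have "\<dots> = sqrt 2 powr M * t powr M" by (simp add: powr_mult)
      finally have j: "jb t powr M / sqrt 2 powr M \<le> t powr M" by (simp add: field_simps)
      have "t powr M \<le> t powr \<alpha>" using t1 al kM by (intro powr_mono) auto
      with j have "jb t powr M / sqrt 2 powr M \<le> t powr \<alpha>" by simp
      then have "D * (jb t powr M / sqrt 2 powr M) \<le> D * t powr \<alpha>" using D by (intro mult_left_mono) auto
      also have "\<dots> \<le> G t" using hyp[OF t] .
      finally show "D / sqrt 2 powr M * jb t powr M \<le> G t" by simp
    qed
    then show "\<exists>A > 0. \<exists>T > 0. \<forall>t \<ge> T. G t \<ge> A * jb t powr M" using A0 T0 by blast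
  qed
qed

end
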